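(* Let $A=(A_1,A_2)\in\mathbb{N}^2$ with $\gcd(A_1,A_2)=1$, let $s\ge 2$, and let $$\varphi(x,y)=\sum_{i=1}^s a_i x^{\alpha_i}y^{\beta_i},$$ where $a_i\neq 0$, $\alpha_i,\beta_i\in\mathbb{N}\cup\{0\}$, $A_1\alpha_i+A_2\beta_i=B$ for all $i$ with a common $B\in\mathbb{N}$, and $\alpha_1>\dots>\alpha_s\ge 0$. Put $g(u)=\sum_{i=1}^s a_i u^{(\alpha_1-\alpha_i)/A_2}$. Assume $a_1>0$, $a_s>0$ and $\alpha_1,\beta_1,\alpha_s,\beta_s$ are even nonnegative integers. Then $\varphi$ is nondegenerate in the weak sense (i.e. $\varphi(x,y)\neq 0$ whenever $x\neq 0$ and $y\neq 0$) if and only if $g(u)>0$ for all $u\in\mathbb{R}$, i.e. if and only if $g$ has no real roots.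
   Context: $\mathbb{N}=\{1,2,\dots\}$. The exponents $(\alpha_1-\alpha_i)/A_2$ are nonnegative integers; $g$ is the characteristic polynomial of $\varphi$, and $\varphi(x,y)=x^{\alpha_1}y^{\beta_1}g(x^{-A_2}y^{A_1})$ for $x\neq0$. *)

theory Defs
  imports Complex_Main
begin

definition qh_poly :: "nat \<Rightarrow> (nat \<Rightarrow> real) \<Rightarrow> (nat \<Rightarrow> nat) \<Rightarrow> (nat \<Rightarrow> nat) \<Rightarrow> real \<Rightarrow> real \<Rightarrow> real" where
  "qh_poly s a \<alpha> \<beta> x y = (\<Sum>i=1..s. a i * x ^ (\<alpha> i) * y ^ (\<beta> i))"

text \<open>Characteristic polynomial g(u) = sum_{i=1..s} a_i u^((alpha_1 - alpha_i)/A_2);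
  the exponents are exact nonnegative integers under the hypotheses.\<close>
definition char_poly :: "nat \<Rightarrow> nat \<Rightarrow> (nat \<Rightarrow> real) \<Rightarrow> (nat \<Rightarrow> nat) \<Rightarrow> real \<Rightarrow> real" where
  "char_poly A2 s a \<alpha> u = (\<Sum>i=1..s. a i * u ^ ((\<alpha> 1 - \<alpha> i) div A2))"

definition weakly_nondegenerate :: "(real \<Rightarrow> real \<Rightarrow> real) \<Rightarrow> bool" where
  "weakly_nondegenerate \<phi> \<longleftrightarrow> (\<forall>x y. x \<noteq> 0 \<longrightarrow> y \<noteq> 0 \<longrightarrow> \<phi> x y \<noteq> 0)"

end

theory Submission
  imports Defs
begin

lemma exps_aux:
  fixes A1 A2 ai a1 bi b1 :: nat
  assumes "A2 \<ge> 1" "coprime A1 A2" "A1 * ai + A2 * bi = A1 * a1 + A2 * b1" "ai \<le> a1"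
  shows "a1 = ai + A2 * ((a1 - ai) div A2) \<and> bi = b1 + A1 * ((a1 - ai) div A2)"
proof -
  define d where "d = a1 - ai"
  have a1: "a1 = ai + d" using assms(4) d_def by simp
  have e: "A2 * bi = A1 * d + A2 * b1" using assms(3) a1 by (simp add: algebra_simps)
  have "A2 dvd A1 * d" proof -
    have "A2 dvd A1 * d + A2 * b1" unfolding e[symmetric] by simp
    then show ?thesis by (simp add: dvd_add_left_iff)
  qed
  then have "A2 dvd d" using assms(2) by (metis coprime_commute coprime_dvd_mult_right_iff)
  then obtain k where k: "d = A2 * k" by blast
  have kk: "d div A2 = k" using k assms(1) by simp
  have "A2 * bi = A2 * (b1 + A1 * k)" using e k by (simp add: algebra_simps)
  then have "bi = b1 + A1 * k" using assms(1) by simp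
  then show ?thesis using a1 k kk d_def by simp
qed

theorem mainTheorem2:
  fixes A1 A2 s B :: nat and a :: "nat \<Rightarrow> real" and \<alpha> \<beta> :: "nat \<Rightarrow> nat"
  assumes "A1 \<ge> 1" and "A2 \<ge> 1" and "coprime A1 A2"
    and "s \<ge> 2"
    and "\<forall>i\<in>{1..s}. a i \<noteq> 0"
    and "B \<ge> 1"
    and "\<forall>i\<in>{1..s}. A1 * \<alpha> i + A2 * \<beta> i = B"
    and "\<forall>i\<in>{1..s}. \<forall>j\<in>{1..s}. i < j \<longrightarrow> \<alpha> j < \<alpha> i"
    and "a 1 > 0" and "a s > 0"
    and "even (\<alpha> 1)" and "even (\<beta> 1)" and "even (\<alpha> s)" and "even (\<beta> s)"
  shows "(weakly_nondegenerate (qh_poly s a \<alpha> \<beta>) \<longleftrightarrow> (\<forall>u::real. char_poly A2 s a \<alpha> u > 0))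
       \<and> (weakly_nondegenerate (qh_poly s a \<alpha> \<beta>) \<longleftrightarrow> (\<forall>u::real. char_poly A2 s a \<alpha> u \<noteq> 0))"
proof -
  let ?g = "char_poly A2 s a \<alpha>"
  let ?k = "\<lambda>i. (\<alpha> 1 - \<alpha> i) div A2"
  have ex: "\<alpha> 1 = \<alpha> i + A2 * ?k i \<and> \<beta> i = \<beta> 1 + A1 * ?k i" if i: "i \<in> {1..s}" for i
  proof -
    have le: "\<alpha> i \<le> \<alpha> 1" proof (cases "i = 1")
      case False
      then have "1 < i" "1 \<in> {1..s}" using i assms(4) by auto
      then show ?thesis using assms(8) i by (meson less_imp_le)
    qed simp
    have "A1 * \<alpha> i + A2 * \<beta> i = A1 * \<alpha> 1 + A2 * \<beta> 1" using assms(7) i assms(4) by auto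
    then show ?thesis using exps_aux[OF assms(2,3) _ le] by blast
  qed
  have iden: "qh_poly s a \<alpha> \<beta> x y = x ^ \<alpha> 1 * y ^ \<beta> 1 * ?g (y ^ A1 / x ^ A2)"
    if xy: "x \<noteq> 0" "y \<noteq> 0" for x y :: real
  proof -
    have "a i * x ^ \<alpha> i * y ^ \<beta> i = x ^ \<alpha> 1 * y ^ \<beta> 1 * (a i * (y ^ A1 / x ^ A2) ^ ?k i)"
      if i: "i \<in> {1..s}" for i
    proof -
      have e: "x ^ \<alpha> 1 = x ^ \<alpha> i * (x ^ A2) ^ ?k i" "y ^ \<beta> i = y ^ \<beta> 1 * (y ^ A1) ^ ?k i"
        using ex[OF i] by (metis power_add power_mult)+
      show ?thesis unfolding e using xy by (simp add: power_divide field_simps)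
    qed
    then show ?thesis unfolding qh_poly_def char_poly_def sum_distrib_left
      by (intro sum.cong) auto
  qed
  have g0: "?g 0 = a 1"
  proof -
    have "?g 0 = (\<Sum>i=1..s. if i = 1 then a 1 else 0)"
      unfolding char_poly_def
    proof (intro sum.cong refl)
      fix i assume i: "i \<in> {1..s}"
      show "a i * 0 ^ ?k i = (if i = 1 then a 1 else 0)"
      proof (cases "i = 1")
        case False
        then have "\<alpha> i < \<alpha> 1" using assms(8) i by auto
        then have "?k i > 0" using ex[OF i] by (metis add.right_neutral gr0I less_not_refl mult_0_right)
        then show ?thesis using False by simp
      qed simp
    qed
    also have "\<dots> = a 1" using assms(4) by simp
    finally show ?thesis .
  qed
  have cont: "continuous_on S ?g" for S
    unfolding char_poly_def by (intro continuous_intros)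
  have pos: "(\<forall>u. ?g u > 0) \<longleftrightarrow> (\<forall>u. ?g u \<noteq> 0)"
  proof
    assume "\<forall>u. ?g u > 0" then show "\<forall>u. ?g u \<noteq> 0" by (metis less_irrefl)
  next
    assume nz: "\<forall>u. ?g u \<noteq> 0"
    show "\<forall>u. ?g u > 0"
    proof (rule ccontr)
      assume "\<not> (\<forall>u. ?g u > 0)"
      then obtain u where u: "?g u \<le> 0" by (auto simp: not_less)
      show False
      proof (cases "u \<le> 0")
        case True
        from IVT'[of ?g u 0 0, OF u _ True cont] g0 assms(9) nz show False by auto
      next
        case False
        from IVT2'[of ?g u 0 0, OF u _ _ cont] False g0 assms(9) nz show False by auto
      qed
    qed
  qed
  have main: "weakly_nondegenerate (qh_poly s a \<alpha> \<beta>) \<longleftrightarrow> (\<forall>u. ?g u \<noteq> 0)"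
  proof
    assume nz: "\<forall>u. ?g u \<noteq> 0"
    show "weakly_nondegenerate (qh_poly s a \<alpha> \<beta>)"
      unfolding weakly_nondegenerate_def using nz iden by simp
  next
    assume wn: "weakly_nondegenerate (qh_poly s a \<alpha> \<beta>)"
    show "\<forall>u. ?g u \<noteq> 0"
    proof (rule ccontr)
      assume "\<not> (\<forall>u. ?g u \<noteq> 0)"
      then obtain u where u: "?g u = 0" by auto
      have "u \<noteq> 0" using u g0 assms(9) by auto
      have "\<exists>x y. x \<noteq> 0 \<and> y \<noteq> 0 \<and> y ^ A1 / x ^ A2 = u"
      proof (cases "u > 0")
        case True
        show ?thesis
          by (rule exI[of _ 1], rule exI[of _ "root A1 u"]) (use True assms(1) in simp)
      next
        case False
        then have un: "u < 0" using \<open>u \<noteq> 0\<close> by simp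
        show ?thesis
        proof (cases "odd A1")
          case True
          show ?thesis
            by (rule exI[of _ 1], rule exI[of _ "- root A1 (- u)"])
               (use True un assms(1) in \<open>simp add: power_minus_odd\<close>)
        next
          case False
          then have "odd A2" using assms(3)
            proof -
            have "\<not> (2 dvd A1 \<and> 2 dvd A2)" using assms(3)
              by (metis coprime_common_divisor_nat numeral_eq_one_iff semiring_norm(85))
            then show ?thesis using False by blast
          qed
          show ?thesis
            by (rule exI[of _ "-1"], rule exI[of _ "root A1 (- u)"])
               (use \<open>odd A2\<close> un assms(1) in simp)
        qed
      qed
      then obtain x y where "x \<noteq> 0" "y \<noteq> 0" "y ^ A1 / x ^ A2 = u" by blast
      then have "qh_poly s a \<alpha> \<beta> x y = 0" using iden u by simp
      then show False using wn \<open>x \<noteq> 0\<close> \<open>y \<noteq> 0\<close> unfolding weakly_nondegenerate_def by blast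
    qed
  qed
  show ?thesis using main pos by blast
qed

end
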